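(* Let $X=\{x_j:j\in J\}\subset\mathbb{R}^2$ be finite with quadratic min-power centre $s^*$ and centroid $M$, and let $r\in J$ be such that $x_r$ is a point of $X$ farthest from $M$. If $s^*\in\mathrm{int}(V(x_j))$ for some $j\in J$, then $s^*=M_r$.
   Context: $n=|J|$; $s^*$ is the unique minimiser of $P(s)=\sum_{i\in J}\|s-x_i\|^2+\max_{i\in J}\|s-x_i\|^2$; $M=\frac1n\sum_ix_i$; $M_j=\frac{1}{n+1}\big(x_j+\sum_{i\in J}x_i\big)$; $V(x_j)=\{s:\|s-x_j\|=\max_{i\in J}\|s-x_i\|\}$ and $\mathrm{int}$ denotes its interior. *)

theory Defs
  imports "HOL-Analysis.Analysis"
begin

definition qpower :: "'j set \<Rightarrow> ('j \<Rightarrow> real^2) \<Rightarrow> real^2 \<Rightarrow> real" where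
  "qpower J x s = (\<Sum>i\<in>J. (norm (s - x i))\<^sup>2) + (MAX i\<in>J. (norm (s - x i))\<^sup>2)"

definition centroid_pt :: "'j set \<Rightarrow> ('j \<Rightarrow> real^2) \<Rightarrow> real^2" where
  "centroid_pt J x = (1 / real (card J)) *\<^sub>R (\<Sum>i\<in>J. x i)"

definition M_pt :: "'j set \<Rightarrow> ('j \<Rightarrow> real^2) \<Rightarrow> 'j \<Rightarrow> real^2" where
  "M_pt J x j = (1 / (real (card J) + 1)) *\<^sub>R (x j + (\<Sum>i\<in>J. x i))"

definition far_cell :: "'j set \<Rightarrow> ('j \<Rightarrow> real^2) \<Rightarrow> 'j \<Rightarrow> (real^2) set" where
  "far_cell J x j = {s. norm (s - x j) = (MAX i\<in>J. norm (s - x i))}"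

end

theory Submission
  imports Defs
begin

lemma sq_expand:
  fixes t c y :: "real^2"
  shows "(norm (t - y))\<^sup>2 = (norm (c - y))\<^sup>2 + 2 * ((t - c) \<bullet> (c - y)) + (norm (t - c))\<^sup>2"
proof -
  have "(t - y) \<bullet> (t - y) = ((t - c) + (c - y)) \<bullet> ((t - c) + (c - y))" by simp
  also have "\<dots> = (c - y) \<bullet> (c - y) + 2 * ((t - c) \<bullet> (c - y)) + (t - c) \<bullet> (t - c)"
    by (simp only: inner_add_left inner_add_right inner_commute[of "c - y" "t - c"])
  finally show ?thesis by (simp add: power2_norm_eq_inner)
qed

lemma Q_identity:
  fixes J :: "'j set" and x :: "'j \<Rightarrow> real^2"
  assumes "finite J" "j \<in> J"
  shows "(\<Sum>i\<in>J. (norm (t - x i))\<^sup>2) + (norm (t - x j))\<^sup>2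
       = (\<Sum>i\<in>J. (norm (M_pt J x j - x i))\<^sup>2) + (norm (M_pt J x j - x j))\<^sup>2
         + (real (card J) + 1) * (norm (t - M_pt J x j))\<^sup>2"
proof -
  define c where "c = M_pt J x j"
  have zero: "(\<Sum>i\<in>J. (c - x i)) + (c - x j) = 0"
  proof -
    have "(real (card J) + 1) *\<^sub>R c = x j + (\<Sum>i\<in>J. x i)"
      unfolding c_def M_pt_def by simp
    moreover have "(\<Sum>i\<in>J. (c - x i)) + (c - x j) = (real (card J) + 1) *\<^sub>R c - (x j + (\<Sum>i\<in>J. x i))"
      by (simp add: sum_subtractf scaleR_add_left scaleR_conv_of_real distrib_right)
    ultimately show ?thesis by simp
  qed
  have "(\<Sum>i\<in>J. (norm (t - x i))\<^sup>2) + (norm (t - x j))\<^sup>2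
      = (\<Sum>i\<in>J. (norm (c - x i))\<^sup>2 + 2 * ((t - c) \<bullet> (c - x i)) + (norm (t - c))\<^sup>2)
        + ((norm (c - x j))\<^sup>2 + 2 * ((t - c) \<bullet> (c - x j)) + (norm (t - c))\<^sup>2)"
  proof -
    have e1: "(\<Sum>i\<in>J. (norm (t - x i))\<^sup>2) = (\<Sum>i\<in>J. (norm (c - x i))\<^sup>2 + 2 * ((t - c) \<bullet> (c - x i)) + (norm (t - c))\<^sup>2)"
      by (rule sum.cong) (rule refl, rule sq_expand)
    show ?thesis unfolding e1 using sq_expand[of t "x j" c] by simp
  qed
  also have "\<dots> = (\<Sum>i\<in>J. (norm (c - x i))\<^sup>2) + (norm (c - x j))\<^sup>2
      + 2 * ((t - c) \<bullet> ((\<Sum>i\<in>J. (c - x i)) + (c - x j)))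
      + (real (card J) + 1) * (norm (t - c))\<^sup>2"
  proof -
    have a: "(\<Sum>i\<in>J. (norm (c - x i))\<^sup>2 + 2 * ((t - c) \<bullet> (c - x i)) + (norm (t - c))\<^sup>2)
       = (\<Sum>i\<in>J. (norm (c - x i))\<^sup>2) + 2 * ((t - c) \<bullet> (\<Sum>i\<in>J. (c - x i))) + real (card J) * (norm (t - c))\<^sup>2"
      by (simp add: sum.distrib inner_sum_right sum_distrib_left)
    show ?thesis unfolding a by (simp add: inner_add_right algebra_simps)
  qed
  also have "\<dots> = (\<Sum>i\<in>J. (norm (c - x i))\<^sup>2) + (norm (c - x j))\<^sup>2
      + (real (card J) + 1) * (norm (t - c))\<^sup>2"
    using zero by simp
  finally show ?thesis unfolding c_def .
qed

lemma max_sq: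
  fixes J :: "'j set" and x :: "'j \<Rightarrow> real^2"
  assumes "finite J" "j \<in> J" "t \<in> far_cell J x j"
  shows "(MAX i\<in>J. (norm (t - x i))\<^sup>2) = (norm (t - x j))\<^sup>2"
proof -
  have "norm (t - x j) = (MAX i\<in>J. norm (t - x i))" using assms(3) unfolding far_cell_def by simp
  then have le: "\<And>i. i \<in> J \<Longrightarrow> norm (t - x i) \<le> norm (t - x j)"
    using assms(1) by simp
  show ?thesis
  proof (rule Max_eqI)
    show "finite ((\<lambda>i. (norm (t - x i))\<^sup>2) ` J)" using assms(1) by simp
    show "(norm (t - x j))\<^sup>2 \<in> (\<lambda>i. (norm (t - x i))\<^sup>2) ` J" using assms(2) by simp
    fix y assume "y \<in> (\<lambda>i. (norm (t - x i))\<^sup>2) ` J"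
    then obtain i where "i \<in> J" "y = (norm (t - x i))\<^sup>2" by auto
    then show "y \<le> (norm (t - x j))\<^sup>2" using le[of i] by (simp add: power_mono)
  qed
qed

theorem corollary1:
  fixes J :: "'j set" and x :: "'j \<Rightarrow> real^2" and s :: "real^2" and r :: 'j
  assumes "finite J" and "J \<noteq> {}"
    and "\<forall>t. qpower J x s \<le> qpower J x t"
    and "\<forall>t. qpower J x s = qpower J x t \<longrightarrow> t = s"
    and "r \<in> J"
    and "\<forall>i\<in>J. norm (x i - centroid_pt J x) \<le> norm (x r - centroid_pt J x)"
    and "\<exists>j\<in>J. s \<in> interior (far_cell J x j)"
  shows "s = M_pt J x r"
proof -
  obtain j where jJ: "j \<in> J" and sint: "s \<in> interior (far_cell J x j)" using assms(7) by blast
  obtain e where e: "e > 0" "ball s e \<subseteq> far_cell J x j"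
    using sint by (meson mem_interior)
  define c where "c = M_pt J x j"
  define K where "K = (\<Sum>i\<in>J. (norm (c - x i))\<^sup>2) + (norm (c - x j))\<^sup>2"
  define m where "m = real (card J) + 1"
  have m: "m > 0" unfolding m_def by simp
  have Qb: "qpower J x t = K + m * (norm (t - c))\<^sup>2" if "t \<in> ball s e" for t
  proof -
    have "t \<in> far_cell J x j" using that e by blast
    then show ?thesis
      unfolding qpower_def using max_sq[OF assms(1) jJ] Q_identity[OF assms(1) jJ, of t]
      unfolding K_def m_def c_def by simp
  qed
  have sc: "s = c"
  proof (rule ccontr)
    assume ne: "s \<noteq> c"
    define d where "d = norm (s - c)"
    have d: "d > 0" using ne unfolding d_def by simp
    define h where "h = min (1/2) (e / (2 * d))"
    have h: "h > 0" "h \<le> 1/2" "h * d < e" using d e unfolding h_def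
      by (auto simp: min_def field_simps)
    define t where "t = s + h *\<^sub>R (c - s)"
    have "dist s t = h * d" unfolding t_def d_def dist_norm using h
      by (simp add: norm_minus_commute)
    then have tb: "t \<in> ball s e" using h by simp
    have "t - c = (1 - h) *\<^sub>R (s - c)" unfolding t_def by (simp add: algebra_simps)
    then have nt: "norm (t - c) = (1 - h) * d" using h unfolding d_def by simp
    have "(1 - h) * d < d" using h d by simp
    then have "((1 - h) * d)\<^sup>2 < d\<^sup>2" using h d
      by (intro power_strict_mono) auto
    then have "qpower J x t < qpower J x s"
      using Qb[OF tb] Qb[of s] e m nt unfolding d_def by simp
    then show False using assms(3) by (meson not_le)
  qed
  define n where "n = real (card J)"
  define M where "M = centroid_pt J x"
  have n: "n > 0" unfolding n_def using assms(1,2) by (simp add: card_gt_0_iff)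
  have SM: "(\<Sum>i\<in>J. x i) = n *\<^sub>R M" unfolding M_def centroid_pt_def n_def using n n_def by simp
  define u where "u = x j - M"
  define v where "v = x r - M"
  have cu: "c = M + (1 / (n + 1)) *\<^sub>R u"
  proof -
    have "c = (1 / (n + 1)) *\<^sub>R (x j + n *\<^sub>R M)" unfolding c_def M_pt_def SM n_def by simp
    also have "\<dots> = M + (1 / (n + 1)) *\<^sub>R u" unfolding u_def using n
      by (simp add: algebra_simps scaleR_add_right) (simp add: scaleR_left_distrib[symmetric] divide_simps)
    finally show ?thesis .
  qed
  have "norm (s - x r) \<le> norm (s - x j)"
  proof -
    have "s \<in> far_cell J x j" using sint interior_subset by blast
    then have "norm (s - x j) = (MAX i\<in>J. norm (s - x i))" unfolding far_cell_def by simp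
    then show ?thesis using assms(1,5) by simp
  qed
  then have "(norm (s - x r))\<^sup>2 \<le> (norm (s - x j))\<^sup>2" by (simp add: power_mono)
  moreover have "s - x j = (1 / (n + 1) - 1) *\<^sub>R u" using sc cu unfolding u_def
    by (simp add: algebra_simps)
  moreover have "s - x r = (1 / (n + 1)) *\<^sub>R u - v" using sc cu unfolding v_def
    by (simp add: algebra_simps)
  ultimately have ineq: "(norm ((1 / (n + 1)) *\<^sub>R u - v))\<^sup>2 \<le> (norm ((1 / (n + 1) - 1) *\<^sub>R u))\<^sup>2"
    by simp
  define k where "k = 1 / (n + 1)"
  define A where "A = u \<bullet> u"
  define B where "B = v \<bullet> v"
  define p where "p = u \<bullet> v"
  have k: "k > 0" "2 * k \<le> 1"
  proof -
    show "k > 0" unfolding k_def using n by simp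
    have "n \<ge> 1" unfolding n_def using assms(1,2) by (simp add: card_gt_0_iff Suc_le_eq)
    then show "2 * k \<le> 1" unfolding k_def by (simp add: field_simps)
  qed
  have "k * k * A - 2 * k * p + B \<le> (k - 1) * (k - 1) * A"
    using ineq unfolding k_def[symmetric] A_def B_def p_def
    by (simp add: power2_norm_eq_inner inner_diff_left inner_diff_right inner_commute algebra_simps)
  then have h1: "B - A \<le> 2 * k * (p - A)" by (simp add: algebra_simps)
  have AB: "A \<le> B"
  proof -
    have "norm u \<le> norm v" using assms(6) jJ unfolding u_def v_def M_def by blast
    then have "(norm u)\<^sup>2 \<le> (norm v)\<^sup>2" by (simp add: power_mono)
    then show ?thesis unfolding A_def B_def by (simp add: power2_norm_eq_inner)
  qed
  have pA: "p - A \<ge> 0"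
  proof (rule ccontr)
    assume "\<not> p - A \<ge> 0"
    then have "2 * k * (p - A) < 0" using k by (simp add: mult_pos_neg)
    then show False using h1 AB by linarith
  qed
  have "2 * k * (p - A) \<le> 1 * (p - A)" using k pA by (intro mult_right_mono) auto
  then have h2: "2 * k * (p - A) \<le> p - A" by simp
  have "B \<le> p" using h1 h2 by linarith
  then have "(u - v) \<bullet> (u - v) \<le> 0" using AB unfolding A_def B_def p_def
    by (simp add: inner_diff_left inner_diff_right inner_commute)
  then have "(u - v) \<bullet> (u - v) = 0" using inner_ge_zero[of "u - v"] by linarith
  then have "u = v" by simp
  then have "x j = x r" unfolding u_def v_def by simp
  then show ?thesis using sc unfolding c_def M_pt_def by simp
qed
end
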